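(* For every integer $k\ge 0$, $$\sum_{n\ge k}B(n,k)\frac{x^n}{n!}=\tan^k x\,\sec x$$ as formal power series (equivalently, as analytic functions near $0$).
   Context: A labeled ballot path is a lattice path from $(0,0)$ with steps $u=(1,1)$, $d=(1,-1)$ never going below the $x$-axis, each step carrying an integer label between $0$ and its height, where the height of a step is the smaller $y$-coordinate of its endpoints. $B(n,k)$ is the number of labeled ballot paths from $(0,0)$ ending at $(n,k)$. *)

theory Defs
  imports Complex_Main "HOL-Computational_Algebra.Formal_Power_Series"
begin

text \<open>A labeled path of length n is a list of pairs (s, l): s is the step
  (1 for u = (1,1), -1 for d = (1,-1)) and l is the integer label (a natural number).\<close>

definition ypos :: "(int \<times> nat) list \<Rightarrow> nat \<Rightarrow> int" where
  "ypos p i = sum_list (map fst (take i p))"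

definition labeled_ballot_path :: "(int \<times> nat) list \<Rightarrow> bool" where
  "labeled_ballot_path p \<longleftrightarrow>
     (\<forall>i < length p. fst (p ! i) \<in> {1, -1} \<and> 0 \<le> ypos p (Suc i) \<and>
        int (snd (p ! i)) \<le> min (ypos p i) (ypos p (Suc i)))"

definition B :: "nat \<Rightarrow> nat \<Rightarrow> nat" where
  "B n k = card {p. labeled_ballot_path p \<and> length p = n \<and> ypos p n = int k}"

end

theory Submission imports Defs begin

abbreviation "ic \<equiv> inverse (fps_cos (1::real))"
abbreviation "tt \<equiv> fps_tan (1::real)"
definition "G k = tt ^ k * ic"

lemma c_ic: "fps_cos (1::real) * ic = 1"
  by (rule inverse_mult_eq_1') simp

lemma tt_eq: "tt = fps_sin 1 * ic"
  by (simp add: fps_tan_def fps_divide_unit)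

lemma ic2: "ic^2 = 1 + tt^2"
proof -
  have "ic^2 = ((fps_cos 1)^2 + (fps_sin 1)^2) * ic^2"
    by (simp add: fps_sin_cos_sum_of_squares)
  also have "\<dots> = (fps_cos 1 * ic)^2 + (fps_sin 1 * ic)^2"
    by (simp add: algebra_simps power2_eq_square)
  finally show ?thesis using c_ic tt_eq by simp
qed

lemma ic_deriv: "fps_deriv ic = tt * ic"
  by (simp add: fps_inverse_deriv fps_cos_deriv tt_eq power2_eq_square flip: fps_const_neg)

lemma tt_deriv: "fps_deriv tt = 1 + tt^2"
proof -
  have "fps_deriv tt = fps_cos 1 * ic + fps_sin 1 * (tt * ic)"
    by (simp add: tt_eq ic_deriv fps_sin_deriv)
  also have "\<dots> = 1 + tt^2" using c_ic by (simp add: tt_eq power2_eq_square algebra_simps)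
  finally show ?thesis .
qed

lemma G_deriv: "fps_deriv (G k) = of_nat k * G (k - 1) + of_nat (k+1) * G (k+1)"
proof (cases k)
  case 0
  then show ?thesis by (simp add: G_def ic_deriv)
next
  case (Suc m)
  have d: "fps_deriv (tt ^ k) = of_nat k * (ic^2) * tt^m"
    using fps_deriv_power'[of tt k] by (simp add: Suc tt_deriv ic2)
  have "fps_deriv (G k) = of_nat k * (ic^2) * tt^m * ic + tt^k * (tt * ic)"
    unfolding G_def fps_deriv_mult d ic_deriv by simp
  also have "\<dots> = of_nat k * G (k - 1) + of_nat (k+1) * G (k+1)"
    unfolding ic2 by (simp add: G_def Suc algebra_simps power2_eq_square)
  finally show ?thesis .
qed

lemma G_0: "fps_nth (G k) 0 = (if k = 0 then 1 else 0)"
  by (simp add: G_def tt_eq fps_nth_power_0)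


lemma ypos_snoc_le: "i \<le> length p \<Longrightarrow> ypos (p @ [x]) i = ypos p i"
  by (simp add: ypos_def)

lemma ypos_snoc_last: "ypos (p @ [x]) (Suc (length p)) = ypos p (length p) + fst x"
  by (simp add: ypos_def)

lemma lbp_snoc: "labeled_ballot_path (p @ [x]) \<longleftrightarrow>
   labeled_ballot_path p \<and> fst x \<in> {1, -1} \<and> 0 \<le> ypos p (length p) + fst x \<and>
   int (snd x) \<le> min (ypos p (length p)) (ypos p (length p) + fst x)"
proof -
  have A: "(\<forall>i < length (p@[x]). Q i) \<longleftrightarrow> (\<forall>i < length p. Q i) \<and> Q (length p)" for Q
    by (auto simp: less_Suc_eq)
  show ?thesis
  proof -
    have E: "(\<forall>i < length p. fst ((p@[x]) ! i) \<in> {1, -1} \<and> 0 \<le> ypos (p@[x]) (Suc i) \<and>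
        int (snd ((p@[x]) ! i)) \<le> min (ypos (p@[x]) i) (ypos (p@[x]) (Suc i))) \<longleftrightarrow> labeled_ballot_path p"
      unfolding labeled_ballot_path_def
      by (intro all_cong1 imp_cong refl) (simp add: nth_append ypos_snoc_le Suc_le_eq)
    show ?thesis
      unfolding labeled_ballot_path_def[of "p@[x]"] A E[symmetric]
      by (simp add: ypos_snoc_le ypos_snoc_last)
  qed
qed

definition S :: "nat \<Rightarrow> int \<Rightarrow> (int \<times> nat) list set" where
  "S n h = {p. labeled_ballot_path p \<and> length p = n \<and> ypos p n = h}"

lemma S_0: "S 0 h = (if h = 0 then {[]} else {})"
  by (auto simp: S_def labeled_ballot_path_def ypos_def)

definition up where "up = (\<lambda>(p, l::nat). p @ [(1::int, l)])"
definition dn where "dn = (\<lambda>(p, l::nat). p @ [(-1::int, l)])"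

lemma S_Suc: "S (Suc n) h = up ` (S n (h - 1) \<times> {l. int l \<le> h - 1}) \<union> dn ` (S n (h + 1) \<times> {l. int l \<le> h})"
proof safe
  fix q assume q: "q \<in> S (Suc n) h"
  then obtain p x where qx: "q = p @ [x]" and lp: "length p = n"
  proof -
    have "length q = Suc n" using q by (simp add: S_def)
    then show ?thesis using that by (auto simp: length_Suc_conv_rev)
  qed
  obtain s l where x: "x = (s, l)" by fastforce
  have L: "labeled_ballot_path p" "s \<in> {1, -1}" "0 \<le> ypos p n + s"
     "int l \<le> min (ypos p n) (ypos p n + s)" "ypos p n + s = h"
  proof -
    have q1: "labeled_ballot_path (p @ [(s, l)])" "ypos (p @ [(s,l)]) (Suc n) = h"
      using q unfolding S_def qx x by simp_all
    have "ypos (p @ [(s,l)]) (Suc n) = ypos p n + s"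
      using ypos_snoc_last[of p "(s,l)"] lp by simp
    then show "labeled_ballot_path p" "s \<in> {1, -1}" "0 \<le> ypos p n + s"
     "int l \<le> min (ypos p n) (ypos p n + s)" "ypos p n + s = h"
      using q1 lbp_snoc[of p "(s,l)"] lp by simp_all
  qed
  assume nd: "q \<notin> dn ` (S n (h + 1) \<times> {l. int l \<le> h})"
  show "q \<in> up ` (S n (h - 1) \<times> {l. int l \<le> h - 1})"
  proof (cases "s = 1")
    case True
    have "q = up (p, l)" using True by (simp add: qx x up_def)
    moreover have "(p, l) \<in> S n (h - 1) \<times> {l. int l \<le> h - 1}"
      using L lp True by (simp add: S_def)
    ultimately show ?thesis by blast
  next
    case False
    then have "s = -1" using L by auto
    have "q = dn (p, l)" using \<open>s = -1\<close> by (simp add: qx x dn_def)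
    moreover have "(p, l) \<in> S n (h + 1) \<times> {l. int l \<le> h}"
      using L lp \<open>s = -1\<close> by (simp add: S_def)
    ultimately have "q \<in> dn ` (S n (h + 1) \<times> {l. int l \<le> h})" by blast
    then show ?thesis using nd by blast
  qed
next
  fix p l assume "p \<in> S n (h - 1)" "int l \<le> h - 1"
  then show "up (p, l) \<in> S (Suc n) h"
    unfolding S_def up_def using lbp_snoc[of p "(1,l)"] ypos_snoc_last[of p "(1,l)"] by auto
next
  fix p l assume "p \<in> S n (h + 1)" "int l \<le> h"
  then show "dn (p, l) \<in> S (Suc n) h"
    unfolding S_def dn_def using lbp_snoc[of p "(-1,l)"] ypos_snoc_last[of p "(-1,l)"] by auto
qed

lemma inj_up: "inj up" by (auto simp: inj_def up_def)
lemma inj_dn: "inj dn" by (auto simp: inj_def dn_def)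

lemma lab_set: "{l::nat. int l \<le> h} = {..<nat (h + 1)}"
  by auto

lemma lab_set2: "{l::nat. int l < h} = {..<nat h}"
  by auto

lemma S_finite: "finite (S n h)"
proof (induction n arbitrary: h)
  case 0 then show ?case by (simp add: S_0)
next
  case (Suc n) then show ?case by (simp add: S_Suc lab_set lab_set2)
qed

lemma S_card_Suc: "card (S (Suc n) h) = card (S n (h - 1)) * nat h + card (S n (h + 1)) * nat (h + 1)"
proof -
  have disj: "up ` (S n (h - 1) \<times> {l. int l \<le> h - 1}) \<inter> dn ` (S n (h + 1) \<times> {l. int l \<le> h}) = {}"
    by (auto simp: up_def dn_def)
  have "card (S (Suc n) h) = card (up ` (S n (h - 1) \<times> {l. int l \<le> h - 1})) + card (dn ` (S n (h + 1) \<times> {l. int l \<le> h}))"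
    unfolding S_Suc by (rule card_Un_disjoint) (auto simp: lab_set lab_set2 S_finite disj up_def dn_def)
  also have "\<dots> = card (S n (h - 1) \<times> {l. int l \<le> h - 1}) + card (S n (h + 1) \<times> {l. int l \<le> h})"
    using inj_up inj_dn by (simp add: card_image inj_on_subset)
  also have "\<dots> = card (S n (h - 1)) * nat h + card (S n (h + 1)) * nat (h + 1)"
    by (simp add: card_cartesian_product lab_set lab_set2)
  finally show ?thesis .
qed

lemma B_S: "B n k = card (S n (int k))"
  by (simp add: B_def S_def)

lemma B_0: "B 0 k = (if k = 0 then 1 else 0)"
  by (simp add: B_S S_0)

lemma B_Suc: "B (Suc n) k = (if k = 0 then 0 else B n (k - 1)) * k + B n (k + 1) * (k + 1)"
proof -
  have "B (Suc n) k = card (S n (int k - 1)) * k + B n (k + 1) * (k + 1)"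
    by (simp add: B_S S_card_Suc add.commute nat_add_distrib)
  moreover have "card (S n (int k - 1)) * k = (if k = 0 then 0 else B n (k - 1)) * k"
    by (cases k) (auto simp: B_S)
  ultimately show ?thesis by simp
qed

lemma B_zero: "n < k \<Longrightarrow> B n k = 0"
proof (induction n arbitrary: k)
  case 0 then show ?case by (simp add: B_0)
next
  case (Suc n) then show ?case by (simp add: B_Suc)
qed

lemma G_nth: "real (B n k) / fact n = fps_nth (G k) n"
proof (induction n arbitrary: k)
  case 0 then show ?case by (simp add: B_0 G_0)
next
  case (Suc n)
  have d: "fps_nth (fps_deriv (G k)) n = of_nat (n + 1) * fps_nth (G k) (Suc n)"
    by simp
  have "fps_nth (fps_deriv (G k)) n = of_nat k * fps_nth (G (k - 1)) n + of_nat (k+1) * fps_nth (G (k+1)) n"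
    unfolding G_deriv fps_add_nth fps_of_nat[symmetric] fps_mult_left_const_nth by simp
  also have "\<dots> = real k * (real (B n (k - 1)) / fact n) + real (k+1) * (real (B n (k+1)) / fact n)"
    by (simp add: Suc.IH)
  also have "\<dots> = real (B (Suc n) k) / fact n"
    by (cases "k = 0") (simp_all add: B_Suc field_simps)
  finally have "of_nat (n + 1) * fps_nth (G k) (Suc n) = real (B (Suc n) k) / fact n"
    using d by simp
  moreover have "real (B (Suc n) k) / fact (Suc n) = (real (B (Suc n) k) / fact n) / of_nat (n+1)"
    by (simp add: fact_Suc divide_divide_eq_left mult.commute)
  ultimately show ?case
    by (metis nonzero_mult_div_cancel_left of_nat_eq_0_iff add_eq_0_iff_both_eq_0 one_neq_zero)
qed

theorem mainTheorem5:
  fixes k :: nat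
  shows "Abs_fps (\<lambda>n. if k \<le> n then real (B n k) / fact n else 0)
           = (fps_tan 1) ^ k * inverse (fps_cos (1::real))"
proof (rule fps_ext)
  fix n
  show "fps_nth (Abs_fps (\<lambda>n. if k \<le> n then real (B n k) / fact n else 0)) n
        = fps_nth ((fps_tan 1) ^ k * inverse (fps_cos (1::real))) n"
  proof -
    have "fps_nth (G k) n = (if k \<le> n then real (B n k)/fact n else 0)"
      using G_nth[of n k, symmetric] B_zero[of n k] by auto
    then show ?thesis by (simp add: G_def)
  qed
qed

end
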